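(* There exists a $\mathbb{C}$-algebra isomorphism $\eta_1:\hat H_{q^{-1}}\to\hat H_q$ such that $$t_0\mapsto t_0^{-1},\qquad t_1\mapsto t_0t_1^{-1}t_0^{-1},\qquad t_2\mapsto t_3^{-1}t_2^{-1}t_3,\qquad t_3\mapsto t_3^{-1}.$$ Moreover $\eta_1^2=1$, i.e. composing $\eta_1$ with the map $\hat H_q\to\hat H_{q^{-1}}$ given by the same formulas yields the identity.
   Context: $q\in\mathbb{C}^*$ is not a root of unity and a square root $q^{1/2}$ is fixed; $q^{-1/2}=(q^{1/2})^{-1}$ is used as the square root of $q^{-1}$. For $p\in\{q,q^{-1}\}$, the universal double affine Hecke algebra $\hat H_p$ of type $(C_1^\vee,C_1)$ is the $\mathbb{C}$-algebra with generators $t_n^{\pm1}$ $(n=0,1,2,3)$ and relations: $t_nt_n^{-1}=t_n^{-1}t_n=1$; $t_n+t_n^{-1}$ is central; $t_0t_1t_2t_3=p^{-1/2}$ (so $t_0t_1t_2t_3=q^{-1/2}$ in $\hat H_q$ and $t_0t_1t_2t_3=q^{1/2}$ in $\hat H_{q^{-1}}$). *)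

theory Defs
  imports Complex_Main
begin

text \<open>Universal double affine Hecke algebra of type (C1v,C1), presented by generators
and relations.  We build the free associative unital complex algebra on the eight letters
t_n and t_n^{-1} (n = 0..3) as finitely supported functions on words (with concatenation
convolution), take the quotient by the two-sided ideal generated by the defining relations,
and use the set of equivalence classes with the induced operations.\<close>

datatype idx = I0 | I1 | I2 | I3

text \<open>Gen n True stands for the generator t_n, Gen n False for the generator t_n^{-1}.\<close>
datatype letter = Gen idx bool

abbreviation t :: "idx \<Rightarrow> letter" where "t n \<equiv> Gen n True"
abbreviation ti :: "idx \<Rightarrow> letter" where "ti n \<equiv> Gen n False"

type_synonym fa = "letter list \<Rightarrow> complex"

definition fa_carrier :: "fa set" where
  "fa_carrier = {f. finite {w. f w \<noteq> 0}}"

definition fa_zero :: fa where "fa_zero = (\<lambda>w. 0)"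
definition fa_add :: "fa \<Rightarrow> fa \<Rightarrow> fa" where "fa_add f g = (\<lambda>w. f w + g w)"
definition fa_smul :: "complex \<Rightarrow> fa \<Rightarrow> fa" where "fa_smul c f = (\<lambda>w. c * f w)"
definition fa_sub :: "fa \<Rightarrow> fa \<Rightarrow> fa" where "fa_sub f g = fa_add f (fa_smul (-1) g)"
definition fa_mul :: "fa \<Rightarrow> fa \<Rightarrow> fa" where
  "fa_mul f g = (\<lambda>w. \<Sum>i\<le>length w. f (take i w) * g (drop i w))"
definition fa_word :: "letter list \<Rightarrow> fa" where
  "fa_word u = (\<lambda>w. if w = u then 1 else 0)"
definition fa_one :: fa where "fa_one = fa_word []"

definition fa_ideal :: "fa set \<Rightarrow> bool" where
  "fa_ideal I \<longleftrightarrow> I \<subseteq> fa_carrier \<and> fa_zero \<in> I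
     \<and> (\<forall>f\<in>I. \<forall>g\<in>I. fa_add f g \<in> I)
     \<and> (\<forall>c f. f \<in> I \<longrightarrow> fa_smul c f \<in> I)
     \<and> (\<forall>f\<in>I. \<forall>g\<in>fa_carrier. fa_mul f g \<in> I \<and> fa_mul g f \<in> I)"

definition ideal_gen :: "fa set \<Rightarrow> fa set" where
  "ideal_gen R = \<Inter>{I. fa_ideal I \<and> R \<subseteq> I}"

text \<open>Defining relations; the parameter c is the value of t0 t1 t2 t3
(c = p^{-1/2}).  Centrality of t_n + t_n^{-1} is imposed by commutation with every
generator letter.\<close>
definition daha_rels :: "complex \<Rightarrow> fa set" where
  "daha_rels c =
     {fa_sub (fa_word [t n, ti n]) fa_one | n. True}
   \<union> {fa_sub (fa_word [ti n, t n]) fa_one | n. True}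
   \<union> {fa_sub (fa_mul (fa_add (fa_word [t n]) (fa_word [ti n])) (fa_word [x]))
             (fa_mul (fa_word [x]) (fa_add (fa_word [t n]) (fa_word [ti n]))) | n x. True}
   \<union> {fa_sub (fa_word [t I0, t I1, t I2, t I3]) (fa_smul c fa_one)}"

definition daha_ideal :: "complex \<Rightarrow> fa set" where
  "daha_ideal c = ideal_gen (daha_rels c)"

definition daha_cls :: "complex \<Rightarrow> fa \<Rightarrow> fa set" where
  "daha_cls c f = {g \<in> fa_carrier. fa_sub f g \<in> daha_ideal c}"

definition daha :: "complex \<Rightarrow> fa set set" where
  "daha c = daha_cls c ` fa_carrier"

definition daha_add :: "complex \<Rightarrow> fa set \<Rightarrow> fa set \<Rightarrow> fa set" where
  "daha_add c X Y = daha_cls c (fa_add (SOME f. f \<in> X) (SOME g. g \<in> Y))"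
definition daha_smul :: "complex \<Rightarrow> complex \<Rightarrow> fa set \<Rightarrow> fa set" where
  "daha_smul c a X = daha_cls c (fa_smul a (SOME f. f \<in> X))"
definition daha_mul :: "complex \<Rightarrow> fa set \<Rightarrow> fa set \<Rightarrow> fa set" where
  "daha_mul c X Y = daha_cls c (fa_mul (SOME f. f \<in> X) (SOME g. g \<in> Y))"
definition daha_one :: "complex \<Rightarrow> fa set" where
  "daha_one c = daha_cls c fa_one"
definition daha_gen :: "complex \<Rightarrow> letter list \<Rightarrow> fa set" where
  "daha_gen c u = daha_cls c (fa_word u)"

definition daha_alg_hom :: "complex \<Rightarrow> complex \<Rightarrow> (fa set \<Rightarrow> fa set) \<Rightarrow> bool" where
  "daha_alg_hom c d \<phi> \<longleftrightarrow>
     (\<forall>X\<in>daha c. \<phi> X \<in> daha d)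
   \<and> (\<forall>X\<in>daha c. \<forall>Y\<in>daha c. \<phi> (daha_add c X Y) = daha_add d (\<phi> X) (\<phi> Y))
   \<and> (\<forall>a. \<forall>X\<in>daha c. \<phi> (daha_smul c a X) = daha_smul d a (\<phi> X))
   \<and> (\<forall>X\<in>daha c. \<forall>Y\<in>daha c. \<phi> (daha_mul c X Y) = daha_mul d (\<phi> X) (\<phi> Y))
   \<and> \<phi> (daha_one c) = daha_one d"

definition daha_alg_iso :: "complex \<Rightarrow> complex \<Rightarrow> (fa set \<Rightarrow> fa set) \<Rightarrow> bool" where
  "daha_alg_iso c d \<phi> \<longleftrightarrow> daha_alg_hom c d \<phi> \<and> bij_betw \<phi> (daha c) (daha d)"

definition eta1_gens :: "complex \<Rightarrow> complex \<Rightarrow> (fa set \<Rightarrow> fa set) \<Rightarrow> bool" where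
  "eta1_gens c d \<phi> \<longleftrightarrow>
     \<phi> (daha_gen c [t I0]) = daha_gen d [ti I0]
   \<and> \<phi> (daha_gen c [t I1]) = daha_gen d [t I0, ti I1, ti I0]
   \<and> \<phi> (daha_gen c [t I2]) = daha_gen d [ti I3, ti I2, t I3]
   \<and> \<phi> (daha_gen c [t I3]) = daha_gen d [ti I3]"

end

theory Submission
  imports Defs
begin

abbreviation W where "W \<equiv> fa_word"
abbreviation car where "car \<equiv> fa_carrier"

lemma fin_letter: "finite (UNIV :: letter set)"
proof -
  have i: "(UNIV :: idx set) = {I0,I1,I2,I3}" using idx.exhaust by blast
  have "(UNIV :: letter set) = (\<lambda>(n,b). Gen n b) ` (UNIV \<times> UNIV)"
    by (auto intro: letter.exhaust) (metis letter.exhaust rangeI split_conv)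
  moreover have "finite ((UNIV::idx set) \<times> (UNIV::bool set))" by (subst i) simp
  ultimately show ?thesis by (metis finite_imageI)
qed

lemma mul_word_word: "fa_mul (W a) (W b) = W (a @ b)"
proof
  fix w
  have "fa_mul (W a) (W b) w = (\<Sum>i\<le>length w. if i = length a then (if w = a @ b then 1 else 0) else 0)"
    unfolding fa_mul_def fa_word_def
  proof (rule sum.cong[OF refl])
    fix i assume "i \<in> {..length w}"
    then have il: "i \<le> length w" by simp
    show "(if take i w = a then 1 else 0) * (if drop i w = b then 1 else 0) =
          (if i = length a then (if w = a @ b then 1 else 0) else (0::complex))"
    proof (cases "i = length a")
      case True
      have "(w = a @ b) = (take i w = a \<and> drop i w = b)"
        using True append_eq_conv_conj[of a b w] by (metis)
      then show ?thesis using True by simp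
    next
      case False
      have "take i w \<noteq> a" using False il by (metis length_take min.absorb2)
      then show ?thesis using False by simp
    qed
  qed
  also have "\<dots> = W (a@b) w" by (auto simp: fa_word_def)
  finally show "fa_mul (W a) (W b) w = W (a @ b) w" .
qed

lemma mul_add_left: "fa_mul (fa_add f g) h = fa_add (fa_mul f h) (fa_mul g h)"
  by (auto simp: fa_mul_def fa_add_def sum.distrib ring_distribs)
lemma mul_add_right: "fa_mul h (fa_add f g) = fa_add (fa_mul h f) (fa_mul h g)"
  by (auto simp: fa_mul_def fa_add_def sum.distrib ring_distribs)
lemma mul_smul_left: "fa_mul (fa_smul c f) g = fa_smul c (fa_mul f g)"
  by (auto simp: fa_mul_def fa_smul_def sum_distrib_left mult.assoc)
lemma mul_smul_right: "fa_mul g (fa_smul c f) = fa_smul c (fa_mul g f)"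
  by (auto simp: fa_mul_def fa_smul_def sum_distrib_left algebra_simps)
lemma mul_zero_left: "fa_mul fa_zero g = fa_zero"
  by (auto simp: fa_mul_def fa_zero_def)
lemma mul_zero_right: "fa_mul g fa_zero = fa_zero"
  by (auto simp: fa_mul_def fa_zero_def)
lemma mul_sub_left: "fa_mul (fa_sub f g) h = fa_sub (fa_mul f h) (fa_mul g h)"
  by (simp add: fa_sub_def mul_add_left mul_smul_left)
lemma mul_sub_right: "fa_mul h (fa_sub f g) = fa_sub (fa_mul h f) (fa_mul h g)"
  by (simp add: fa_sub_def mul_add_right mul_smul_right)

lemma car_zero: "fa_zero \<in> car" by (simp add: fa_carrier_def fa_zero_def)
lemma car_word: "W u \<in> car" by (simp add: fa_carrier_def fa_word_def)
lemma car_add: assumes "f \<in> car" "g \<in> car" shows "fa_add f g \<in> car"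
proof -
  have "{w. fa_add f g w \<noteq> 0} \<subseteq> {w. f w \<noteq> 0} \<union> {w. g w \<noteq> 0}"
    by (auto simp: fa_add_def)
  moreover have "finite ({w. f w \<noteq> 0} \<union> {w. g w \<noteq> 0})" using assms by (simp add: fa_carrier_def)
  ultimately show ?thesis unfolding fa_carrier_def by (simp add: finite_subset)
qed
lemma car_smul: assumes "f \<in> car" shows "fa_smul c f \<in> car"
proof -
  have "{w. fa_smul c f w \<noteq> 0} \<subseteq> {w. f w \<noteq> 0}"
    by (auto simp: fa_smul_def)
  then show ?thesis using assms unfolding fa_carrier_def by (simp add: finite_subset)
qed
lemma car_sub: "f \<in> car \<Longrightarrow> g \<in> car \<Longrightarrow> fa_sub f g \<in> car"
  by (simp add: fa_sub_def car_add car_smul)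
lemma car_mul: assumes "f \<in> car" "g \<in> car" shows "fa_mul f g \<in> car"
proof -
  have "{w. fa_mul f g w \<noteq> 0} \<subseteq> (\<lambda>(a,b). a @ b) ` ({w. f w \<noteq> 0} \<times> {w. g w \<noteq> 0})"
  proof
    fix w assume "w \<in> {w. fa_mul f g w \<noteq> 0}"
    then have "(\<Sum>i\<le>length w. f (take i w) * g (drop i w)) \<noteq> 0" by (simp add: fa_mul_def)
    then obtain i where "f (take i w) * g (drop i w) \<noteq> 0"
      by (rule sum.not_neutral_contains_not_neutral)
    then show "w \<in> (\<lambda>(a,b). a @ b) ` ({w. f w \<noteq> 0} \<times> {w. g w \<noteq> 0})"
      by (auto intro!: image_eqI[of _ _ "(take i w, drop i w)"])
  qed
  moreover have "finite ((\<lambda>(a,b). a @ b) ` ({w. f w \<noteq> 0} \<times> {w. g w \<noteq> 0}))"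
    using assms unfolding fa_carrier_def by (intro finite_imageI finite_cartesian_product) auto
  ultimately show ?thesis unfolding fa_carrier_def mem_Collect_eq by (rule finite_subset)
qed

lemma carrier_induct[consumes 1, case_names zero step]:
  assumes "f \<in> car" "P fa_zero"
    "\<And>c w g. g \<in> car \<Longrightarrow> P g \<Longrightarrow> P (fa_add (fa_smul c (W w)) g)"
  shows "P f"
proof -
  have "\<forall>f. {w. f w \<noteq> 0} \<subseteq> S \<longrightarrow> P f" if "finite S" for S
    using that
  proof (induction S rule: finite_induct)
    case empty
    show ?case proof (intro allI impI)
      fix f :: fa assume "{w. f w \<noteq> 0} \<subseteq> {}"
      then have "f = fa_zero" unfolding fa_zero_def by blast
      then show "P f" using assms(2) by simp
    qed
  next
    case (insert x S)
    show ?case proof (intro allI impI)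
      fix f :: fa assume s: "{w. f w \<noteq> 0} \<subseteq> insert x S"
      let ?g = "f(x := 0)"
      have gs: "{w. ?g w \<noteq> 0} \<subseteq> S"
      proof
        fix w assume "w \<in> {w. ?g w \<noteq> 0}"
        then have "w \<noteq> x" "f w \<noteq> 0" by (auto split: if_splits)
        then show "w \<in> S" using s by blast
      qed
      have gc: "?g \<in> car" unfolding fa_carrier_def
        using finite_subset[OF gs insert(1)] by simp
      have feq: "f = fa_add (fa_smul (f x) (W x)) ?g"
        by (auto simp: fa_add_def fa_smul_def fa_word_def)
      have "P ?g" using insert(3) gs by blast
      from assms(3)[OF gc this, of "f x" x] have "P (fa_add (fa_smul (f x) (W x)) ?g)" .
      then show "P f" by (subst feq)
    qed
  qed
  moreover have "finite {w. f w \<noteq> 0}" using assms(1) unfolding fa_carrier_def by simp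
  ultimately show ?thesis by blast
qed

lemma ideal_car: "fa_ideal car"
  unfolding fa_ideal_def by (auto simp: car_zero car_add car_smul car_mul)

lemma rels_car: "daha_rels c \<subseteq> car"
  unfolding daha_rels_def fa_one_def
  by (auto intro!: car_sub car_mul car_add car_word car_smul)

lemma ideal_gen_ideal: assumes "R \<subseteq> car" shows "fa_ideal (ideal_gen R)"
proof -
  let ?F = "{I. fa_ideal I \<and> R \<subseteq> I}"
  have cF: "car \<in> ?F" using assms ideal_car by blast
  show ?thesis using cF unfolding ideal_gen_def fa_ideal_def by auto
qed

lemma ideal_gen_sub: "R \<subseteq> ideal_gen R" unfolding ideal_gen_def by blast
lemma ideal_gen_min: "fa_ideal J \<Longrightarrow> R \<subseteq> J \<Longrightarrow> ideal_gen R \<subseteq> J"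
  unfolding ideal_gen_def by blast

abbreviation I where "I c \<equiv> daha_ideal c"

lemma I_ideal: "fa_ideal (I c)"
  unfolding daha_ideal_def by (rule ideal_gen_ideal[OF rels_car])

lemma I_rels: "r \<in> daha_rels c \<Longrightarrow> r \<in> I c"
  unfolding daha_ideal_def using ideal_gen_sub by blast

lemma I_car: "f \<in> I c \<Longrightarrow> f \<in> car" using I_ideal[of c] unfolding fa_ideal_def by blast
lemma I_zero: "fa_zero \<in> I c" using I_ideal[of c] unfolding fa_ideal_def by blast
lemma I_add: "f \<in> I c \<Longrightarrow> g \<in> I c \<Longrightarrow> fa_add f g \<in> I c"
  using I_ideal[of c] unfolding fa_ideal_def by blast
lemma I_smul: "f \<in> I c \<Longrightarrow> fa_smul a f \<in> I c"
  using I_ideal[of c] unfolding fa_ideal_def by blast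
lemma I_mulr: "f \<in> I c \<Longrightarrow> g \<in> car \<Longrightarrow> fa_mul f g \<in> I c"
  using I_ideal[of c] unfolding fa_ideal_def by blast
lemma I_mull: "f \<in> I c \<Longrightarrow> g \<in> car \<Longrightarrow> fa_mul g f \<in> I c"
  using I_ideal[of c] unfolding fa_ideal_def by blast

definition eqv :: "complex \<Rightarrow> fa \<Rightarrow> fa \<Rightarrow> bool" where
  "eqv c f g \<longleftrightarrow> fa_sub f g \<in> I c"

lemma eqv_refl: "f \<in> car \<Longrightarrow> eqv c f f"
proof -
  have "fa_sub f f = fa_zero" by (auto simp: fa_sub_def fa_add_def fa_smul_def fa_zero_def)
  then show ?thesis by (simp add: eqv_def I_zero)
qed

lemma eqv_sym: "eqv c f g \<Longrightarrow> eqv c g f"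
proof -
  have "fa_sub g f = fa_smul (-1) (fa_sub f g)" by (auto simp: fa_sub_def fa_add_def fa_smul_def)
  then show "eqv c f g \<Longrightarrow> eqv c g f" by (simp add: eqv_def I_smul)
qed

lemma eqv_trans: "eqv c f g \<Longrightarrow> eqv c g h \<Longrightarrow> eqv c f h"
proof -
  have "fa_sub f h = fa_add (fa_sub f g) (fa_sub g h)" by (auto simp: fa_sub_def fa_add_def fa_smul_def)
  then show "eqv c f g \<Longrightarrow> eqv c g h \<Longrightarrow> eqv c f h" by (simp add: eqv_def I_add)
qed

lemma eqv_add: "eqv c f f' \<Longrightarrow> eqv c g g' \<Longrightarrow> eqv c (fa_add f g) (fa_add f' g')"
proof -
  have "fa_sub (fa_add f g) (fa_add f' g') = fa_add (fa_sub f f') (fa_sub g g')"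
    by (auto simp: fa_sub_def fa_add_def fa_smul_def)
  then show "eqv c f f' \<Longrightarrow> eqv c g g' \<Longrightarrow> eqv c (fa_add f g) (fa_add f' g')"
    by (simp add: eqv_def I_add)
qed

lemma eqv_smul: "eqv c f g \<Longrightarrow> eqv c (fa_smul a f) (fa_smul a g)"
proof -
  have "fa_sub (fa_smul a f) (fa_smul a g) = fa_smul a (fa_sub f g)"
    by (auto simp: fa_sub_def fa_add_def fa_smul_def algebra_simps)
  then show "eqv c f g \<Longrightarrow> eqv c (fa_smul a f) (fa_smul a g)" by (simp add: eqv_def I_smul)
qed

lemma eqv_mul: assumes "eqv c f f'" "eqv c g g'" "g \<in> car" "f' \<in> car"
  shows "eqv c (fa_mul f g) (fa_mul f' g')"
proof -
  have "fa_sub (fa_mul f g) (fa_mul f' g') = fa_add (fa_mul (fa_sub f f') g) (fa_mul f' (fa_sub g g'))"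
    by (simp only: mul_sub_left mul_sub_right) (auto simp: fa_sub_def fa_add_def fa_smul_def)
  then show ?thesis using assms by (simp add: eqv_def I_add I_mulr I_mull)
qed

lemma eqv_car: "eqv c f g \<Longrightarrow> g \<in> car \<Longrightarrow> f \<in> car"
proof -
  assume a: "eqv c f g" "g \<in> car"
  have "f = fa_add (fa_sub f g) g" by (auto simp: fa_sub_def fa_add_def fa_smul_def)
  then show ?thesis using a I_car[of _ c] car_add unfolding eqv_def by metis
qed

abbreviation cls where "cls \<equiv> daha_cls"

lemma cls_mem: "f \<in> car \<Longrightarrow> f \<in> cls c f"
  by (simp add: daha_cls_def eqv_refl[unfolded eqv_def])

lemma cls_eq: assumes "f \<in> car" "g \<in> car" shows "cls c f = cls c g \<longleftrightarrow> eqv c f g"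
proof
  assume "cls c f = cls c g"
  then have "g \<in> cls c f" using cls_mem[OF assms(2)] by simp
  then show "eqv c f g" by (simp add: daha_cls_def eqv_def)
next
  assume e: "eqv c f g"
  show "cls c f = cls c g"
    unfolding daha_cls_def eqv_def[symmetric]
    using e eqv_sym eqv_trans by blast
qed

lemma cls_eqI: "f \<in> car \<Longrightarrow> g \<in> car \<Longrightarrow> eqv c f g \<Longrightarrow> cls c f = cls c g"
  using cls_eq by blast

lemma some_cls: assumes "f \<in> car" shows "(SOME g. g \<in> cls c f) \<in> car \<and> eqv c f (SOME g. g \<in> cls c f)"
proof -
  have "(SOME g. g \<in> cls c f) \<in> cls c f" using someI[of "\<lambda>g. g \<in> cls c f" f] cls_mem[OF assms, of c] by blast
  then show ?thesis by (simp add: daha_cls_def eqv_def)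
qed

lemma daha_add_cls: assumes "f \<in> car" "g \<in> car"
  shows "daha_add c (cls c f) (cls c g) = cls c (fa_add f g)"
  unfolding daha_add_def using some_cls[OF assms(1), of c] some_cls[OF assms(2), of c] assms
  by (intro cls_eqI) (auto intro: car_add eqv_add eqv_sym)

lemma daha_smul_cls: assumes "f \<in> car"
  shows "daha_smul c a (cls c f) = cls c (fa_smul a f)"
  unfolding daha_smul_def using some_cls[OF assms(1), of c] assms
  by (intro cls_eqI) (auto intro: car_smul eqv_smul eqv_sym)

lemma daha_mul_cls: assumes "f \<in> car" "g \<in> car"
  shows "daha_mul c (cls c f) (cls c g) = cls c (fa_mul f g)"
  unfolding daha_mul_def using some_cls[OF assms(1), of c] some_cls[OF assms(2), of c] assms
  by (intro cls_eqI) (auto intro: car_mul eqv_mul eqv_sym)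

fun flip :: "letter \<Rightarrow> letter" where "flip (Gen n b) = Gen n (\<not> b)"
definition invw :: "letter list \<Rightarrow> letter list" where "invw w = rev (map flip w)"

lemma flip_flip[simp]: "flip (flip x) = x" by (cases x) simp
lemma invw_simps[simp]: "invw [] = []" "invw (x # w) = invw w @ [flip x]"
  "invw (a @ b) = invw b @ invw a" "invw (invw w) = w"
  by (simp_all add: invw_def rev_map[symmetric] comp_def)

fun img :: "letter \<Rightarrow> letter list" where
  "img (Gen I0 True) = [ti I0]"
| "img (Gen I0 False) = [t I0]"
| "img (Gen I1 True) = [t I0, ti I1, ti I0]"
| "img (Gen I1 False) = [t I0, t I1, ti I0]"
| "img (Gen I2 True) = [ti I3, ti I2, t I3]"
| "img (Gen I2 False) = [ti I3, t I2, t I3]"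
| "img (Gen I3 True) = [ti I3]"
| "img (Gen I3 False) = [t I3]"

lemma img_ne: "img x \<noteq> []"
  by (cases x rule: img.cases) simp_all

definition cm :: "letter list \<Rightarrow> letter list" where "cm w = concat (map img w)"

lemma cm_simps[simp]: "cm [] = []" "cm (x # w) = img x @ cm w" "cm (a @ b) = cm a @ cm b"
  by (simp_all add: cm_def)

lemma cm_len: "length w \<le> length (cm w)"
proof (induction w)
  case (Cons x w)
  then show ?case using img_ne[of x] by (simp, metis Suc_le_eq length_greater_0_conv add_le_mono add_0 add.commute le_add2 add_Suc_right Suc_eq_plus1 order_trans)
qed simp

lemma cm_fin: "finite {w. cm w = v}"
proof -
  have "{w. cm w = v} \<subseteq> {w. set w \<subseteq> UNIV \<and> length w \<le> length v}"
    using cm_len by auto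
  moreover have "finite {w. set w \<subseteq> (UNIV::letter set) \<and> length w \<le> length v}"
    by (rule finite_lists_length_le[OF fin_letter])
  ultimately show ?thesis by (rule finite_subset)
qed

definition phi :: "fa \<Rightarrow> fa" where "phi f = (\<lambda>v. \<Sum>w\<in>{w. cm w = v}. f w)"

lemma phi_word: "phi (W u) = W (cm u)"
proof
  fix v
  have "phi (W u) v = (\<Sum>w\<in>{w. cm w = v}. if w = u then 1 else 0)"
    by (simp add: phi_def fa_word_def)
  also have "\<dots> = (if u \<in> {w. cm w = v} then 1 else 0)"
    using sum.delta[OF cm_fin[of v], of u "\<lambda>_. 1::complex"] by simp
  also have "\<dots> = W (cm u) v" by (auto simp: fa_word_def)
  finally show "phi (W u) v = W (cm u) v" .
qed

lemma phi_add: "phi (fa_add f g) = fa_add (phi f) (phi g)"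
  by (auto simp: phi_def fa_add_def sum.distrib)
lemma phi_smul: "phi (fa_smul c f) = fa_smul c (phi f)"
  by (auto simp: phi_def fa_smul_def sum_distrib_left)
lemma phi_zero: "phi fa_zero = fa_zero"
  by (auto simp: phi_def fa_zero_def)
lemma phi_sub: "phi (fa_sub f g) = fa_sub (phi f) (phi g)"
  by (simp add: fa_sub_def phi_add phi_smul)

lemma phi_car: assumes "f \<in> car" shows "phi f \<in> car"
  using assms
proof (induction rule: carrier_induct)
  case zero then show ?case by (simp add: phi_zero car_zero)
next
  case (step c w g) then show ?case by (simp add: phi_add phi_smul phi_word car_add car_smul car_word)
qed

lemma phi_mul_word: assumes "g \<in> car" shows "phi (fa_mul (W u) g) = fa_mul (W (cm u)) (phi g)"
  using assms
proof (induction rule: carrier_induct)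
  case zero then show ?case by (simp add: phi_zero mul_zero_right)
next
  case (step c w g) then show ?case
    by (simp add: phi_add phi_smul phi_word mul_add_right mul_smul_right mul_word_word)
qed

lemma phi_mul: assumes "f \<in> car" "g \<in> car" shows "phi (fa_mul f g) = fa_mul (phi f) (phi g)"
  using assms(1)
proof (induction rule: carrier_induct)
  case zero then show ?case by (simp add: phi_zero mul_zero_left)
next
  case (step c w f) then show ?case
    by (simp add: phi_add phi_smul phi_word mul_add_left mul_smul_left phi_mul_word[OF assms(2)])
qed

lemma smul_one: "fa_smul 1 f = f" by (simp add: fa_smul_def)

lemma sand: assumes "eqv c (W u) (fa_smul k (W v))"
  shows "eqv c (W (a @ u @ b)) (fa_smul k (W (a @ v @ b)))"
proof -
  have i: "eqv c (fa_mul (W u) (W b)) (fa_mul (fa_smul k (W v)) (W b))"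
    by (rule eqv_mul[OF assms eqv_refl]) (auto intro: car_word car_smul)
  have o: "eqv c (fa_mul (W a) (fa_mul (W u) (W b))) (fa_mul (W a) (fa_mul (fa_smul k (W v)) (W b)))"
    by (rule eqv_mul[OF eqv_refl i]) (auto intro: car_word car_mul)
  then show ?thesis by (simp add: mul_word_word mul_smul_left mul_smul_right)
qed

lemma sand1: assumes "eqv c (W u) (W v)" shows "eqv c (W (a @ u @ b)) (W (a @ v @ b))"
  using sand[of c u 1 v a b] assms by (simp add: smul_one)

lemma cancel: "eqv c (W (a @ x # flip x # b)) (W (a @ b))"
proof -
  obtain n bb where x: "x = Gen n bb" by (cases x)
  have "eqv c (W [x, flip x]) (W [])"
  proof (cases bb)
    case True
    have "fa_sub (W [t n, ti n]) fa_one \<in> daha_rels c" unfolding daha_rels_def by blast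
    then show ?thesis using x True I_rels by (simp add: eqv_def fa_one_def)
  next
    case False
    have "fa_sub (W [ti n, t n]) fa_one \<in> daha_rels c" unfolding daha_rels_def by blast
    then show ?thesis using x False I_rels by (simp add: eqv_def fa_one_def)
  qed
  from sand1[OF this, of a b] show ?thesis by simp
qed

lemma cancelI: "w = a @ x # flip x # b \<Longrightarrow> eqv c (W w) (W (a @ b))"
  using cancel by simp

lemma invcancel: "eqv c (W (a @ w @ invw w @ b)) (W (a @ b))"
proof (induction w arbitrary: a b)
  case Nil then show ?case by (simp add: eqv_refl car_word)
next
  case (Cons x w)
  have "eqv c (W ((a @ [x]) @ w @ invw w @ (flip x # b))) (W ((a @ [x]) @ (flip x # b)))"
    by (rule Cons)
  moreover have "eqv c (W (a @ x # flip x # b)) (W (a @ b))" by (rule cancel)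
  ultimately show ?case by (auto intro: eqv_trans)
qed

lemma invcancel2: "eqv c (W (a @ invw w @ w @ b)) (W (a @ b))"
  using invcancel[of c a "invw w" b] by simp

definition S2 :: "letter list \<Rightarrow> letter list \<Rightarrow> fa" where "S2 u v = fa_add (W u) (W v)"

lemma S2_car: "S2 u v \<in> car" by (simp add: S2_def car_add car_word)
lemma S2_comm: "S2 u v = S2 v u" by (auto simp: S2_def fa_add_def)

lemma sand2: assumes "eqv c (S2 u1 u2) (S2 v1 v2)"
  shows "eqv c (S2 (a @ u1 @ b) (a @ u2 @ b)) (S2 (a @ v1 @ b) (a @ v2 @ b))"
proof -
  have i: "eqv c (fa_mul (S2 u1 u2) (W b)) (fa_mul (S2 v1 v2) (W b))"
    by (rule eqv_mul[OF assms eqv_refl]) (auto intro: car_word S2_car)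
  have o: "eqv c (fa_mul (W a) (fa_mul (S2 u1 u2) (W b))) (fa_mul (W a) (fa_mul (S2 v1 v2) (W b)))"
    by (rule eqv_mul[OF eqv_refl i]) (auto intro: car_word car_mul S2_car)
  then show ?thesis by (simp add: S2_def mul_word_word mul_add_left mul_add_right)
qed

definition cp :: "letter list \<Rightarrow> letter list \<Rightarrow> bool" where
  "cp p r \<longleftrightarrow> (\<exists>m. (p = [t m] \<and> r = [ti m]) \<or> (p = [ti m] \<and> r = [t m]))"

lemma central_letter: assumes "cp p r" shows "eqv c (S2 (p @ [x]) (r @ [x])) (S2 (x # p) (x # r))"
proof -
  obtain m where m: "(p = [t m] \<and> r = [ti m]) \<or> (p = [ti m] \<and> r = [t m])"
    using assms cp_def by blast
  have "fa_sub (fa_mul (fa_add (W [t m]) (W [ti m])) (W [x]))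
             (fa_mul (W [x]) (fa_add (W [t m]) (W [ti m]))) \<in> daha_rels c"
    unfolding daha_rels_def by blast
  then have "eqv c (S2 [t m, x] [ti m, x]) (S2 [x, t m] [x, ti m])"
    using I_rels by (simp add: eqv_def S2_def mul_add_left mul_add_right mul_word_word)
  then show ?thesis using m S2_comm by auto
qed

lemma central: assumes "cp p r" shows "eqv c (S2 (p @ u) (r @ u)) (S2 (u @ p) (u @ r))"
proof (induction u)
  case Nil then show ?case by (simp add: eqv_refl S2_car)
next
  case (Cons x u)
  have 1: "eqv c (S2 ([] @ (p @ [x]) @ u) ([] @ (r @ [x]) @ u)) (S2 ([] @ (x # p) @ u) ([] @ (x # r) @ u))"
    by (rule sand2[OF central_letter[OF assms]])
  have 2: "eqv c (S2 ([x] @ (p @ u) @ []) ([x] @ (r @ u) @ [])) (S2 ([x] @ (u @ p) @ []) ([x] @ (u @ r) @ []))"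
    by (rule sand2[OF Cons])
  from 1 2 show ?case by (auto intro: eqv_trans)
qed

lemma conj_l: assumes "cp p r"
  shows "eqv c (S2 (a @ p @ invw a @ u) (a @ r @ invw a @ u)) (S2 (p @ u) (r @ u))"
proof -
  have 1: "eqv c (S2 (a @ (p @ invw a) @ u) (a @ (r @ invw a) @ u)) (S2 (a @ (invw a @ p) @ u) (a @ (invw a @ r) @ u))"
    by (rule sand2[OF central[OF assms]])
  have 2: "eqv c (S2 (a @ invw a @ p @ u) (a @ invw a @ r @ u)) (S2 (p @ u) (r @ u))"
    unfolding S2_def using invcancel[of c "[]" a "p @ u"] invcancel[of c "[]" a "r @ u"]
    by (auto intro: eqv_add)
  from 1 2 show ?thesis by (auto intro: eqv_trans)
qed

lemma conj_r: assumes "cp p r"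
  shows "eqv c (S2 (u @ a @ p @ invw a) (u @ a @ r @ invw a)) (S2 (u @ p) (u @ r))"
proof -
  have 1: "eqv c (S2 ((u @ a) @ (p @ invw a) @ []) ((u @ a) @ (r @ invw a) @ [])) (S2 ((u @ a) @ (invw a @ p) @ []) ((u @ a) @ (invw a @ r) @ []))"
    by (rule sand2[OF central[OF assms]])
  have 2: "eqv c (S2 (u @ a @ invw a @ p) (u @ a @ invw a @ r)) (S2 (u @ p) (u @ r))"
    unfolding S2_def using invcancel[of c u a p] invcancel[of c u a r]
    by (auto intro: eqv_add)
  from 1 2 show ?thesis by (auto intro: eqv_trans)
qed

lemma img_flip: "img (flip x) = invw (img x)"
  by (cases x rule: img.cases) simp_all

lemma img_conj: "\<exists>a p r. cp p r \<and> img (t n) = a @ p @ invw a \<and> img (ti n) = a @ r @ invw a"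
proof (cases n)
  case I0 then show ?thesis by (intro exI[of _ "[]"] exI[of _ "[ti I0]"] exI[of _ "[t I0]"]) (auto simp: cp_def)
next
  case I1 then show ?thesis by (intro exI[of _ "[t I0]"] exI[of _ "[ti I1]"] exI[of _ "[t I1]"]) (auto simp: cp_def)
next
  case I2 then show ?thesis by (intro exI[of _ "[ti I3]"] exI[of _ "[ti I2]"] exI[of _ "[t I2]"]) (auto simp: cp_def)
next
  case I3 then show ?thesis by (intro exI[of _ "[]"] exI[of _ "[ti I3]"] exI[of _ "[t I3]"]) (auto simp: cp_def)
qed

lemma central_img: "eqv c (S2 (img (t n) @ v) (img (ti n) @ v)) (S2 (v @ img (t n)) (v @ img (ti n)))"
proof -
  obtain a p r where h: "cp p r" "img (t n) = a @ p @ invw a" "img (ti n) = a @ r @ invw a"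
    using img_conj by blast
  have 1: "eqv c (S2 (img (t n) @ v) (img (ti n) @ v)) (S2 (p @ v) (r @ v))"
    using conj_l[OF h(1), of c a v] h by simp
  have 2: "eqv c (S2 (v @ img (t n)) (v @ img (ti n))) (S2 (v @ p) (v @ r))"
    using conj_r[OF h(1), of c v a] h by simp
  from eqv_trans[OF 1 eqv_trans[OF central[OF h(1)] eqv_sym[OF 2]]] show ?thesis .
qed

lemma main_rel: "eqv c (W [t I0, t I1, t I2, t I3]) (fa_smul c (W []))"
proof -
  have "fa_sub (W [t I0, t I1, t I2, t I3]) (fa_smul c fa_one) \<in> daha_rels c"
    unfolding daha_rels_def by blast
  then show ?thesis using I_rels by (simp add: eqv_def fa_one_def)
qed

lemma main_inv: assumes "c * d = 1"
  shows "eqv d (W [ti I1, ti I0, ti I3, ti I2]) (fa_smul c (W []))"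
proof -
  have a1: "eqv d (W [ti I1, ti I0, t I0, t I1, t I2, t I3, t I0, t I1]) (W [t I2, t I3, t I0, t I1])"
    using cancelI[of "[ti I1, ti I0, t I0, t I1, t I2, t I3, t I0, t I1]" "[ti I1]" "ti I0" "[t I1, t I2, t I3, t I0, t I1]" d]
      cancelI[of "[ti I1, t I1, t I2, t I3, t I0, t I1]" "[]" "ti I1" "[t I2, t I3, t I0, t I1]" d]
    by (auto intro: eqv_trans)
  have a2: "eqv d (W ([ti I1, ti I0] @ [t I0, t I1, t I2, t I3] @ [t I0, t I1])) (fa_smul d (W ([ti I1, ti I0] @ [] @ [t I0, t I1])))"
    by (rule sand[OF main_rel])
  have a3: "eqv d (W [ti I1, ti I0, t I0, t I1]) (W [])"
    using invcancel2[of d "[]" "[t I0, t I1]" "[]"] by simp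
  have A: "eqv d (W [t I2, t I3, t I0, t I1]) (fa_smul d (W []))"
    using eqv_trans[OF eqv_sym[OF a1] eqv_trans[OF a2[simplified] eqv_smul[OF a3]]] .
  have b1: "eqv d (W ([] @ [t I2, t I3, t I0, t I1] @ [ti I1, ti I0, ti I3, ti I2])) (fa_smul d (W ([] @ [] @ [ti I1, ti I0, ti I3, ti I2])))"
    by (rule sand[OF A])
  have b2: "eqv d (W [t I2, t I3, t I0, t I1, ti I1, ti I0, ti I3, ti I2]) (W [])"
    using invcancel[of d "[]" "[t I2, t I3, t I0, t I1]" "[]"] by simp
  have B: "eqv d (fa_smul d (W [ti I1, ti I0, ti I3, ti I2])) (W [])"
    using eqv_trans[OF eqv_sym[OF b1[simplified]] b2] .
  have "fa_smul c (fa_smul d (W [ti I1, ti I0, ti I3, ti I2])) = W [ti I1, ti I0, ti I3, ti I2]"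
    using assms by (auto simp: fa_smul_def mult.assoc[symmetric])
  then show ?thesis using eqv_smul[OF B, of c] by simp
qed

lemma phi_S2: "phi (S2 u v) = S2 (cm u) (cm v)"
  by (simp add: S2_def phi_add phi_word)

lemma good: assumes cd: "c * d = 1" and r: "r \<in> daha_rels c" shows "phi r \<in> I d"
proof -
  have fl: "flip (t n) = ti n" "flip (ti n) = t n" for n by simp_all
  have inv1: "img (ti n) = invw (img (t n))" for n using img_flip[of "t n"] by simp
  have inv2: "img (t n) = invw (img (ti n))" for n using img_flip[of "ti n"] by simp
  from r consider (a) n where "r = fa_sub (W [t n, ti n]) fa_one"
    | (b) n where "r = fa_sub (W [ti n, t n]) fa_one"
    | (c) n x where "r = fa_sub (fa_mul (fa_add (W [t n]) (W [ti n])) (W [x]))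
             (fa_mul (W [x]) (fa_add (W [t n]) (W [ti n])))"
    | (d) "r = fa_sub (W [t I0, t I1, t I2, t I3]) (fa_smul c fa_one)"
    unfolding daha_rels_def by blast
  then show ?thesis
  proof cases
    case a
    have "eqv d (W ([] @ img (t n) @ invw (img (t n)) @ [])) (W ([] @ []))" by (rule invcancel)
    then show ?thesis using a inv1[of n] by (simp add: phi_sub phi_word fa_one_def eqv_def)
  next
    case b
    have "eqv d (W ([] @ img (ti n) @ invw (img (ti n)) @ [])) (W ([] @ []))" by (rule invcancel)
    then show ?thesis using b inv2[of n] by (simp add: phi_sub phi_word fa_one_def eqv_def)
  next
    case c
    have e1: "fa_mul (fa_add (W [t n]) (W [ti n])) (W [x]) = S2 [t n, x] [ti n, x]"
      by (simp add: S2_def mul_add_left mul_word_word)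
    have e2: "fa_mul (W [x]) (fa_add (W [t n]) (W [ti n])) = S2 [x, t n] [x, ti n]"
      by (simp add: S2_def mul_add_right mul_word_word)
    show ?thesis using c central_img[of d n "img x"]
      by (simp add: e1 e2 phi_sub phi_S2 eqv_def)
  next
    case d
    have 1: "eqv d (W [ti I0, t I0, ti I1, ti I0, ti I3, ti I2, t I3, ti I3]) (W [ti I1, ti I0, ti I3, ti I2, t I3, ti I3])"
      using cancelI[of _ "[]" "ti I0" "[ti I1, ti I0, ti I3, ti I2, t I3, ti I3]" d] by simp
    have 2: "eqv d (W [ti I1, ti I0, ti I3, ti I2, t I3, ti I3]) (W [ti I1, ti I0, ti I3, ti I2])"
      using cancelI[of _ "[ti I1, ti I0, ti I3, ti I2]" "t I3" "[]" d] by simp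
    have "eqv d (W [ti I0, t I0, ti I1, ti I0, ti I3, ti I2, t I3, ti I3]) (fa_smul c (W []))"
      using eqv_trans[OF 1 eqv_trans[OF 2 main_inv[OF cd]]] .
    then show ?thesis using d by (simp add: phi_sub phi_word phi_smul fa_one_def eqv_def)
  qed
qed

lemma phi_ideal: assumes cd: "c * d = 1" and f: "f \<in> I c" shows "phi f \<in> I d"
proof -
  let ?J = "{f \<in> car. phi f \<in> I d}"
  have "fa_ideal ?J" unfolding fa_ideal_def
    by (auto simp: phi_zero phi_add phi_smul phi_mul phi_car car_zero car_add car_smul car_mul
             I_zero I_add I_smul I_mulr I_mull)
  moreover have "daha_rels c \<subseteq> ?J" using rels_car good[OF cd] by blast
  ultimately have "I c \<subseteq> ?J" unfolding daha_ideal_def by (rule ideal_gen_min)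
  then show ?thesis using f by blast
qed

lemma phi_eqv: "c * d = 1 \<Longrightarrow> eqv c f g \<Longrightarrow> eqv d (phi f) (phi g)"
  unfolding eqv_def by (metis phi_ideal phi_sub)

definition eta :: "complex \<Rightarrow> fa set \<Rightarrow> fa set" where
  "eta d X = cls d (phi (SOME f. f \<in> X))"

lemma eta_cls: assumes cd: "c * d = 1" and f: "f \<in> car" shows "eta d (cls c f) = cls d (phi f)"
  unfolding eta_def using some_cls[OF f, of c] f
  by (intro cls_eqI) (auto intro: phi_car phi_eqv[OF cd] eqv_sym)

lemma daha_obtain: "X \<in> daha c \<Longrightarrow> \<exists>f\<in>car. X = cls c f"
  unfolding daha_def by blast
lemma daha_in: "f \<in> car \<Longrightarrow> cls c f \<in> daha c"
  unfolding daha_def by blast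

lemma eta_hom: assumes cd: "c * d = 1" shows "daha_alg_hom c d (eta d)"
  unfolding daha_alg_hom_def
proof (intro conjI ballI allI)
  fix X assume "X \<in> daha c"
  then obtain f where f: "f \<in> car" "X = cls c f" using daha_obtain by blast
  show "eta d X \<in> daha d" using f eta_cls[OF cd] by (simp add: daha_in phi_car)
  fix a
  show "eta d (daha_smul c a X) = daha_smul d a (eta d X)"
    using f by (simp add: daha_smul_cls eta_cls[OF cd] car_smul phi_car phi_smul)
next
  fix X Y assume "X \<in> daha c" "Y \<in> daha c"
  then obtain f g where f: "f \<in> car" "X = cls c f" and g: "g \<in> car" "Y = cls c g"
    using daha_obtain by metis
  show "eta d (daha_add c X Y) = daha_add d (eta d X) (eta d Y)"
    using f g by (simp add: daha_add_cls eta_cls[OF cd] car_add phi_car phi_add)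
  show "eta d (daha_mul c X Y) = daha_mul d (eta d X) (eta d Y)"
    using f g by (simp add: daha_mul_cls eta_cls[OF cd] car_mul phi_car phi_mul)
next
  show "eta d (daha_one c) = daha_one d"
    by (simp add: daha_one_def fa_one_def eta_cls[OF cd] car_word phi_word)
qed

lemma eta_gens: assumes cd: "c * d = 1" shows "eta1_gens c d (eta d)"
  unfolding eta1_gens_def daha_gen_def
  by (simp add: eta_cls[OF cd] car_word phi_word)

lemma twocancel: "w = a @ x # flip x # b \<Longrightarrow> a @ b = a' @ y # flip y # b' \<Longrightarrow> eqv c (W w) (W (a' @ b'))"
  using cancelI eqv_trans by metis

lemma phiphi_letter: "eqv c (W (cm (img x))) (W [x])"
proof (cases x rule: img.cases)
  case 3 then show ?thesis
    using twocancel[where c=c and a="[]" and x="ti I0" and b="[t I1, ti I0, t I0]" and a'="[t I1]" and y="ti I0" and b'="[]"] by simp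
next
  case 4 then show ?thesis
    using twocancel[where c=c and a="[]" and x="ti I0" and b="[ti I1, ti I0, t I0]" and a'="[ti I1]" and y="ti I0" and b'="[]"] by simp
next
  case 5 then show ?thesis
    using twocancel[where c=c and a="[]" and x="t I3" and b="[t I2, t I3, ti I3]" and a'="[t I2]" and y="t I3" and b'="[]"] by simp
next
  case 6 then show ?thesis
    using twocancel[where c=c and a="[]" and x="t I3" and b="[ti I2, t I3, ti I3]" and a'="[ti I2]" and y="t I3" and b'="[]"] by simp
qed (simp_all add: eqv_refl car_word)

lemma phiphi_word: "eqv c (W (cm (cm w))) (W w)"
proof (induction w)
  case Nil then show ?case by (simp add: eqv_refl car_word)
next
  case (Cons x w)
  have 1: "eqv c (W ([] @ cm (img x) @ cm (cm w))) (W ([] @ [x] @ cm (cm w)))"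
    by (rule sand1[OF phiphi_letter])
  have 2: "eqv c (W ([x] @ cm (cm w) @ [])) (W ([x] @ w @ []))"
    by (rule sand1[OF Cons])
  from 1 2 show ?case by (auto intro: eqv_trans)
qed

lemma phiphi: assumes "f \<in> car" shows "eqv c (phi (phi f)) f"
  using assms
proof (induction rule: carrier_induct)
  case zero then show ?case by (simp add: phi_zero eqv_refl car_zero)
next
  case (step a w g) then show ?case
    by (simp add: phi_add phi_smul phi_word eqv_add eqv_smul phiphi_word)
qed

lemma eta_inv: assumes "c * d = 1" "X \<in> daha c" shows "eta c (eta d X) = X"
proof -
  obtain f where f: "f \<in> car" "X = cls c f" using daha_obtain assms(2) by blast
  have "d * c = 1" using assms(1) by (simp add: mult.commute)
  then have "eta c (eta d X) = cls c (phi (phi f))"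
    using f eta_cls[OF assms(1)] eta_cls[of d c] phi_car by simp
  also have "\<dots> = X" using f phiphi[OF f(1), of c] phi_car
    by (simp add: cls_eqI)
  finally show ?thesis .
qed

theorem lemma10p1:
  fixes q qh :: complex
  assumes "q \<noteq> 0" and "\<forall>n::nat. n > 0 \<longrightarrow> q ^ n \<noteq> 1" and "qh ^ 2 = q"
  shows "\<exists>\<eta> \<eta>'.
           daha_alg_iso qh (inverse qh) \<eta> \<and> eta1_gens qh (inverse qh) \<eta>
         \<and> daha_alg_hom (inverse qh) qh \<eta>' \<and> eta1_gens (inverse qh) qh \<eta>'
         \<and> (\<forall>X\<in>daha qh. \<eta>' (\<eta> X) = X)
         \<and> (\<forall>Y\<in>daha (inverse qh). \<eta> (\<eta>' Y) = Y)"
proof -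
  have nz: "qh \<noteq> 0" using assms(1,3) by auto
  have c1: "qh * inverse qh = 1" using nz by simp
  have c2: "inverse qh * qh = 1" using nz by simp
  have h1: "daha_alg_hom qh (inverse qh) (eta (inverse qh))" by (rule eta_hom[OF c1])
  have h2: "daha_alg_hom (inverse qh) qh (eta qh)" by (rule eta_hom[OF c2])
  have l: "\<forall>X\<in>daha qh. eta qh (eta (inverse qh) X) = X" using eta_inv[OF c1] by blast
  have r: "\<forall>Y\<in>daha (inverse qh). eta (inverse qh) (eta qh Y) = Y" using eta_inv[OF c2] by blast
  have i1: "eta (inverse qh) ` daha qh \<subseteq> daha (inverse qh)" using h1 unfolding daha_alg_hom_def by blast
  have i2: "eta qh ` daha (inverse qh) \<subseteq> daha qh" using h2 unfolding daha_alg_hom_def by blast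
  have b: "bij_betw (eta (inverse qh)) (daha qh) (daha (inverse qh))"
    by (rule bij_betw_byWitness[OF l r i1 i2])
  show ?thesis
    apply (rule exI[of _ "eta (inverse qh)"], rule exI[of _ "eta qh"])
    using h1 h2 b l r eta_gens[OF c1] eta_gens[OF c2] unfolding daha_alg_iso_def by blast
qed

end
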